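(* Let $M\subseteq B(H)$ be a finite-dimensional von Neumann algebra, $N=B(K)$, and let $V\subseteq B(H)\otimes B(K)$ be a decomposable quantum multi-relation on $(M,N)$ with components $V_1\subseteq B(\overline K,H)$ and $V_2\subseteq B(H,\overline K)$. Then the following are equivalent: (1) $V$ is symmetric, i.e. $V^*=V$; (2) $V_1=V_2^*:=\{T^*:T\in V_2\}$. Moreover, if $V$ is symmetric then $V^2\subseteq V$, i.e. $V$ is transitive.
   Context: All Hilbert spaces are finite dimensional; inner products linear in the second variable; $\theta_{\xi,\eta}(\eta')=\langle\eta,\eta'\rangle\xi$; $\overline K$ is the conjugate Hilbert space. A quantum multi-relation on $(M,N)$ is a subspace $V\subseteq B(H)\otimes N\subseteq B(H\otimes K)$ which is an $(M'\otimes1)$–$(M'\otimes1)$ bimodule with $(1\otimes Z(N))V\subseteq V$. Let $\sigma:B(\overline K,H)\otimes B(H,\overline K)\to B(H)\otimes B(K)$ be the linear isomorphism $\sigma(\theta_{\xi_1,\overline{\eta_1}}\otimes\theta_{\overline{\eta_2},\xi_2})=\theta_{\xi_1,\xi_2}\otimes\theta_{\eta_1,\eta_2}$. $V$ is decomposable if there are subspaces $V_1\subseteq B(\overline K,H)$, $V_2\subseteq B(H,\overline K)$ (its components) with $\sigma(V_1\otimes V_2)=V$. $V^*=\{T^*:T\in V\}$ and $V^2=\mathrm{span}\{ST:S,T\in V\}$. *)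

theory Defs
  imports "HOL-Analysis.Analysis"
begin

text \<open>Concrete model: H = complex^'n, K = complex^'m, with orthonormal standard bases
  e_i, f_k; the conjugate space K-bar has the orthonormal basis f_k-bar.
  Operators are matrices w.r.t. these bases: B(H) = complex^'n^'n, B(K) = complex^'m^'m,
  B(H (x) K) = complex^('n*'m)^('n*'m) (index (i,k) for e_i (x) f_k),
  B(K-bar,H) = complex^'m^'n, B(H,K-bar) = complex^'n^'m.\<close>

definition cscale :: "complex \<Rightarrow> complex^'c^'r \<Rightarrow> complex^'c^'r" where
  "cscale c A = (\<chi> i j. c * A$i$j)"

definition csubspace :: "(complex^'c^'r) set \<Rightarrow> bool" where
  "csubspace V \<longleftrightarrow> 0 \<in> V \<and> (\<forall>x\<in>V. \<forall>y\<in>V. x + y \<in> V) \<and> (\<forall>c. \<forall>x\<in>V. cscale c x \<in> V)"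

definition cspan :: "(complex^'c^'r) set \<Rightarrow> (complex^'c^'r) set" where
  "cspan S = \<Inter>{V. csubspace V \<and> S \<subseteq> V}"

definition cadj :: "complex^'c^'r \<Rightarrow> complex^'r^'c" where
  "cadj A = (\<chi> i j. cnj (A$j$i))"

definition kron :: "complex^'n^'n \<Rightarrow> complex^'m^'m \<Rightarrow> complex^('n\<times>'m)^('n\<times>'m)" where
  "kron A B = (\<chi> p q. A$(fst p)$(fst q) * B$(snd p)$(snd q))"

text \<open>The map sigma on elementary tensors: for A in B(K-bar,H), B in B(H,K-bar),
  sigma(A (x) B) has matrix entries ((i,k),(j,l)) |-> A_{ik} B_{lj}; this is
  sigma(theta_{e_i, f_k-bar} (x) theta_{f_l-bar, e_j}) = theta_{e_i,e_j} (x) theta_{f_k,f_l}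
  extended linearly.\<close>
definition sigma_el :: "complex^'m^'n \<Rightarrow> complex^'n^'m \<Rightarrow> complex^('n\<times>'m)^('n\<times>'m)" where
  "sigma_el A B = (\<chi> p q. A$(fst p)$(snd p) * B$(snd q)$(fst q))"

definition fd_vna :: "(complex^'n^'n) set \<Rightarrow> bool" where
  "fd_vna M \<longleftrightarrow> csubspace M \<and> mat 1 \<in> M \<and> (\<forall>A\<in>M. \<forall>B\<in>M. A ** B \<in> M)
     \<and> (\<forall>A\<in>M. cadj A \<in> M)"

definition commutant :: "(complex^'n^'n) set \<Rightarrow> (complex^'n^'n) set" where
  "commutant M = {T. \<forall>A\<in>M. T ** A = A ** T}"

definition center :: "(complex^'n^'n) set \<Rightarrow> (complex^'n^'n) set" where
  "center N = {Z \<in> N. \<forall>Y\<in>N. Z ** Y = Y ** Z}"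

definition quantum_multi_relation ::
  "(complex^'n^'n) set \<Rightarrow> (complex^'m^'m) set \<Rightarrow> (complex^('n\<times>'m)^('n\<times>'m)) set \<Rightarrow> bool" where
  "quantum_multi_relation M N V \<longleftrightarrow>
     csubspace V \<and> V \<subseteq> cspan {kron A B | A B. B \<in> N} \<and>
     (\<forall>T\<in>commutant M. \<forall>X\<in>V. kron T (mat 1) ** X \<in> V \<and> X ** kron T (mat 1) \<in> V) \<and>
     (\<forall>Z\<in>center N. \<forall>X\<in>V. kron (mat 1) Z ** X \<in> V)"

definition decomposable_with ::
  "(complex^('n\<times>'m)^('n\<times>'m)) set \<Rightarrow> (complex^'m^'n) set \<Rightarrow> (complex^'n^'m) set \<Rightarrow> bool" where
  "decomposable_with V V1 V2 \<longleftrightarrow> csubspace V1 \<and> csubspace V2 \<and>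
     V = cspan {sigma_el A B | A B. A \<in> V1 \<and> B \<in> V2}"

definition sq_rel :: "(complex^'c^'c) set \<Rightarrow> (complex^'c^'c) set" where
  "sq_rel V = cspan {S ** T | S T. S \<in> V \<and> T \<in> V}"

end

theory Submission
  imports Defs
begin

lemma cspan_sub: "csubspace (cspan S)"
  unfolding cspan_def csubspace_def by auto

lemma cspan_sup: "S \<subseteq> cspan S"
  unfolding cspan_def by auto

lemma cspan_least: "csubspace W \<Longrightarrow> S \<subseteq> W \<Longrightarrow> cspan S \<subseteq> W"
  unfolding cspan_def by auto

lemma cspan_eq: "csubspace W \<Longrightarrow> cspan W = W"
  using cspan_least cspan_sup by blast

lemma cspan_image:
  fixes f :: "complex^'c^'r \<Rightarrow> complex^'d^'s"
  assumes "f 0 = 0" "\<And>x y. f (x + y) = f x + f y" "\<And>c x. f (cscale c x) = cscale (g c) (f x)"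
  shows "f ` cspan S \<subseteq> cspan (f ` S)"
proof -
  have "csubspace (f -` cspan (f ` S))"
  proof -
    have W: "csubspace (cspan (f ` S))" by (rule cspan_sub)
    have "0 \<in> f -` cspan (f ` S)" using W assms(1) unfolding csubspace_def by simp
    moreover have "\<forall>x\<in>f -` cspan (f ` S). \<forall>y\<in>f -` cspan (f ` S). x + y \<in> f -` cspan (f ` S)"
    proof (intro ballI)
      fix x y assume "x \<in> f -` cspan (f ` S)" "y \<in> f -` cspan (f ` S)"
      then show "x + y \<in> f -` cspan (f ` S)" using W assms(2)[of x y] unfolding csubspace_def vimage_def by auto
    qed
    moreover have "\<forall>c. \<forall>x\<in>f -` cspan (f ` S). cscale c x \<in> f -` cspan (f ` S)"
    proof (intro allI ballI)
      fix c x assume "x \<in> f -` cspan (f ` S)"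
      then show "cscale c x \<in> f -` cspan (f ` S)" using W assms(3)[of c x] unfolding csubspace_def vimage_def by auto
    qed
    ultimately show ?thesis unfolding csubspace_def by blast
  qed
  moreover have "S \<subseteq> f -` cspan (f ` S)" using cspan_sup by blast
  ultimately show ?thesis using cspan_least by blast
qed

lemma cadj_cadj[simp]: "cadj (cadj A) = A"
  unfolding cadj_def by (simp add: vec_eq_iff)

lemma cadj_props: "cadj 0 = 0" "cadj (x + y) = cadj x + cadj y"
  "cadj (cscale c x) = cscale (cnj c) (cadj x)"
  unfolding cadj_def cscale_def by (auto simp: vec_eq_iff)

lemma cadj_cspan: "cadj ` cspan S = cspan (cadj ` S)"
proof
  show "cadj ` cspan S \<subseteq> cspan (cadj ` S)"
    by (rule cspan_image) (rule cadj_props)+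
  have "cadj ` cspan (cadj ` S) \<subseteq> cspan (cadj ` cadj ` S)"
    by (rule cspan_image) (rule cadj_props)+
  moreover have "cadj ` cadj ` S = S" by (simp add: image_image)
  ultimately have "cadj ` cspan (cadj ` S) \<subseteq> cspan S" by simp
  then have "cadj ` cadj ` cspan (cadj ` S) \<subseteq> cadj ` cspan S" by (rule image_mono)
  then show "cspan (cadj ` S) \<subseteq> cadj ` cspan S" by (simp add: image_image)
qed

lemma cadj_subspace: "csubspace V \<Longrightarrow> csubspace (cadj ` V)"
  using cspan_sub[of "cadj ` V"] cadj_cspan[of V] cspan_eq[of V] by simp

lemma cadj_sigma: "cadj (sigma_el A B) = sigma_el (cadj B) (cadj A)"
  unfolding cadj_def sigma_el_def by (auto simp: vec_eq_iff)

lemma sigma_zero2: "sigma_el A 0 = 0"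
  unfolding sigma_el_def by (auto simp: vec_eq_iff)

definition slice :: "'n \<Rightarrow> 'm \<Rightarrow> complex^('n\<times>'m)^('n\<times>'m) \<Rightarrow> complex^'m^'n" where
  "slice j l Y = (\<chi> i k. Y$(i,k)$(j,l))"

definition slices :: "(complex^('n\<times>'m)^('n\<times>'m)) set \<Rightarrow> (complex^'m^'n) set" where
  "slices V = {slice j l Y | j l Y. Y \<in> V}"

lemma slice_sigma: "slice j l (sigma_el A B) = cscale (B$l$j) A"
  unfolding slice_def sigma_el_def cscale_def by (auto simp: vec_eq_iff mult.commute)

lemma slices_eq:
  assumes "csubspace V1" "csubspace V2" "B0 \<in> V2" "B0 \<noteq> 0"
  shows "slices (cspan {sigma_el A B | A B. A \<in> V1 \<and> B \<in> V2}) = V1"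
proof
  show "slices (cspan {sigma_el A B | A B. A \<in> V1 \<and> B \<in> V2}) \<subseteq> V1"
  proof
    fix X assume "X \<in> slices (cspan {sigma_el A B | A B. A \<in> V1 \<and> B \<in> V2})"
    then obtain j l Y where X: "X = slice j l Y" and Y: "Y \<in> cspan {sigma_el A B | A B. A \<in> V1 \<and> B \<in> V2}"
      unfolding slices_def by blast
    have "csubspace {Y. slice j l Y \<in> V1}"
    proof -
      have s0: "slice j l 0 = 0" "slice j l (x + y) = slice j l x + slice j l y"
        "slice j l (cscale c x) = cscale c (slice j l x)" for x y c
        unfolding slice_def cscale_def by (auto simp: vec_eq_iff)
      show ?thesis using assms(1) unfolding csubspace_def by (simp add: s0)
    qed
    moreover have "{sigma_el A B | A B. A \<in> V1 \<and> B \<in> V2} \<subseteq> {Y. slice j l Y \<in> V1}"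
      using assms(1) by (auto simp: slice_sigma csubspace_def)
    ultimately show "X \<in> V1" using cspan_least Y X by blast
  qed
next
  show "V1 \<subseteq> slices (cspan {sigma_el A B | A B. A \<in> V1 \<and> B \<in> V2})"
  proof
    fix A assume A: "A \<in> V1"
    obtain l j where nz: "B0$l$j \<noteq> 0" using assms(4) by (metis vec_eq_iff zero_index)
    let ?B = "cscale (inverse (B0$l$j)) B0"
    have B: "?B \<in> V2" using assms(2,3) unfolding csubspace_def by blast
    have "slice j l (sigma_el A ?B) = A"
      using nz by (simp add: slice_sigma cscale_def vec_eq_iff)
    moreover have "sigma_el A ?B \<in> {sigma_el A B | A B. A \<in> V1 \<and> B \<in> V2}"
      using A B by blast
    then have "sigma_el A ?B \<in> cspan {sigma_el A B | A B. A \<in> V1 \<and> B \<in> V2}"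
      by (rule subsetD[OF cspan_sup])
    ultimately show "A \<in> slices (cspan {sigma_el A B | A B. A \<in> V1 \<and> B \<in> V2})"
      unfolding slices_def by (intro CollectI exI conjI) (rule sym, assumption+)
  qed
qed


lemma sigma_zero1: "sigma_el 0 B = 0"
  unfolding sigma_el_def by (auto simp: vec_eq_iff)

lemma mult_lin:
  fixes S T U :: "complex^'c^'c"
  shows "S ** 0 = 0" "0 ** S = 0" "S ** (T + U) = S ** T + S ** U" "(T + U) ** S = T ** S + U ** S"
    "S ** cscale c T = cscale c (S ** T)" "cscale c T ** S = cscale c (T ** S)"
  unfolding matrix_matrix_mult_def cscale_def
  by (auto simp: vec_eq_iff sum.distrib sum_distrib_left algebra_simps)

lemma sigma_mult:
  "sigma_el A B ** sigma_el C D =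
     cscale (\<Sum>r\<in>UNIV. B$(snd r)$(fst r) * C$(fst r)$(snd r)) (sigma_el A D)"
  unfolding matrix_matrix_mult_def cscale_def sigma_el_def
  by (auto simp: vec_eq_iff sum_distrib_left sum_distrib_right algebra_simps)

lemma sq_sub:
  assumes "csubspace V1" "csubspace V2"
    and V: "V = cspan {sigma_el A B | A B. A \<in> V1 \<and> B \<in> V2}"
  shows "sq_rel V \<subseteq> V"
proof -
  let ?G = "{sigma_el A B | A B. A \<in> V1 \<and> B \<in> V2}"
  have sV: "csubspace V" using V cspan_sub by simp
  have GV: "?G \<subseteq> V" using V cspan_sup by simp
  have step1: "sigma_el A B ** T \<in> V" if A: "A \<in> V1" and B: "B \<in> V2" and T: "T \<in> V" for A B T
  proof -
    have "csubspace {T. sigma_el A B ** T \<in> V}"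
      using sV unfolding csubspace_def by (simp add: mult_lin)
    moreover have "?G \<subseteq> {T. sigma_el A B ** T \<in> V}"
    proof
      fix X assume "X \<in> ?G"
      then obtain C D where X: "X = sigma_el C D" "C \<in> V1" "D \<in> V2" by blast
      have "sigma_el A D \<in> V" using GV A X(3) by blast
      then show "X \<in> {T. sigma_el A B ** T \<in> V}"
        using sV unfolding csubspace_def by (simp add: X(1) sigma_mult)
    qed
    ultimately have "V \<subseteq> {T. sigma_el A B ** T \<in> V}" using V cspan_least by blast
    then show ?thesis using T by blast
  qed
  have step2: "S ** T \<in> V" if S: "S \<in> V" and T: "T \<in> V" for S T
  proof -
    have "csubspace {S. S ** T \<in> V}"
      using sV unfolding csubspace_def by (simp add: mult_lin)
    moreover have "?G \<subseteq> {S. S ** T \<in> V}" using step1 T by blast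
    ultimately have "V \<subseteq> {S. S ** T \<in> V}" using V cspan_least by blast
    then show ?thesis using S by blast
  qed
  have "{S ** T | S T. S \<in> V \<and> T \<in> V} \<subseteq> V" using step2 by blast
  then show ?thesis unfolding sq_rel_def using sV cspan_least by blast
qed

lemma nonzero_comp:
  assumes "csubspace V1" "csubspace V2"
    and V: "V = cspan {sigma_el A B | A B. A \<in> V1 \<and> B \<in> V2}" and "V \<noteq> {0}"
  shows "\<exists>A\<in>V1. A \<noteq> 0" "\<exists>B\<in>V2. B \<noteq> 0"
proof -
  have "0 \<in> V" using V cspan_sub unfolding csubspace_def by blast
  then have nsub: "\<not> V \<subseteq> {0}" using assms(4) by blast
  show "\<exists>A\<in>V1. A \<noteq> 0"
  proof (rule ccontr)
    assume "\<not> (\<exists>A\<in>V1. A \<noteq> 0)"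
    then have "{sigma_el A B | A B. A \<in> V1 \<and> B \<in> V2} \<subseteq> {0}"
    proof (intro subsetI)
      fix X assume h: "\<not> (\<exists>A\<in>V1. A \<noteq> 0)" "X \<in> {sigma_el A B | A B. A \<in> V1 \<and> B \<in> V2}"
      then obtain A B where "X = sigma_el A B" "A \<in> V1" "B \<in> V2" by blast
      then show "X \<in> {0}" using h(1) sigma_zero1 by (metis singletonI)
    qed
    then have "V \<subseteq> {0}" unfolding V
      by (intro cspan_least) (auto simp: csubspace_def cscale_def vec_eq_iff)
    then show False using nsub by blast
  qed
  show "\<exists>B\<in>V2. B \<noteq> 0"
  proof (rule ccontr)
    assume "\<not> (\<exists>B\<in>V2. B \<noteq> 0)"
    then have "{sigma_el A B | A B. A \<in> V1 \<and> B \<in> V2} \<subseteq> {0}"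
    proof (intro subsetI)
      fix X assume h: "\<not> (\<exists>A\<in>V2. A \<noteq> 0)" "X \<in> {sigma_el A B | A B. A \<in> V1 \<and> B \<in> V2}"
      then obtain A B where "X = sigma_el A B" "A \<in> V1" "B \<in> V2" by blast
      then show "X \<in> {0}" using h(1) sigma_zero2 by (metis singletonI)
    qed
    then have "V \<subseteq> {0}" unfolding V
      by (intro cspan_least) (auto simp: csubspace_def cscale_def vec_eq_iff)
    then show False using nsub by blast
  qed
qed

lemma cadj_G:
  "cadj ` {sigma_el A B | A B. A \<in> V1 \<and> B \<in> V2} =
   {sigma_el A B | A B. A \<in> cadj ` V2 \<and> B \<in> cadj ` V1}"
proof
  show "cadj ` {sigma_el A B | A B. A \<in> V1 \<and> B \<in> V2} \<subseteq> {sigma_el A B | A B. A \<in> cadj ` V2 \<and> B \<in> cadj ` V1}"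
    by (auto simp: cadj_sigma) blast
  show "{sigma_el A B | A B. A \<in> cadj ` V2 \<and> B \<in> cadj ` V1} \<subseteq> cadj ` {sigma_el A B | A B. A \<in> V1 \<and> B \<in> V2}"
  proof
    fix X assume "X \<in> {sigma_el A B | A B. A \<in> cadj ` V2 \<and> B \<in> cadj ` V1}"
    then obtain A B where X: "X = sigma_el (cadj B) (cadj A)" "A \<in> V1" "B \<in> V2" by blast
    then have "X = cadj (sigma_el A B)" by (simp add: cadj_sigma)
    then show "X \<in> cadj ` {sigma_el A B | A B. A \<in> V1 \<and> B \<in> V2}" using X(2,3) by blast
  qed
qed

theorem proposition5p6:
  fixes M :: "(complex^'n::finite^'n) set"
    and V :: "(complex^('n\<times>'m::finite)^('n\<times>'m)) set"
    and V1 :: "(complex^'m^'n) set"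
    and V2 :: "(complex^'n^'m) set"
  assumes "fd_vna M"
    and "quantum_multi_relation M (UNIV :: (complex^'m^'m) set) V"
    and "decomposable_with V V1 V2"
    and "V \<noteq> {0}"
  shows "(cadj ` V = V \<longleftrightarrow> V1 = cadj ` V2) \<and> (cadj ` V = V \<longrightarrow> sq_rel V \<subseteq> V)"
proof -
  have s1: "csubspace V1" and s2: "csubspace V2"
    and V: "V = cspan {sigma_el A B | A B. A \<in> V1 \<and> B \<in> V2}"
    using assms(3) unfolding decomposable_with_def by auto
  obtain A0 where A0: "A0 \<in> V1" "A0 \<noteq> 0" using nonzero_comp(1)[OF s1 s2 V assms(4)] by blast
  obtain B0 where B0: "B0 \<in> V2" "B0 \<noteq> 0" using nonzero_comp(2)[OF s1 s2 V assms(4)] by blast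
  have cV: "cadj ` V = cspan {sigma_el A B | A B. A \<in> cadj ` V2 \<and> B \<in> cadj ` V1}"
    unfolding V by (simp only: cadj_cspan cadj_G)
  have sl1: "slices V = V1" using slices_eq[OF s1 s2 B0] V by simp
  have cA0: "cadj A0 \<in> cadj ` V1" "cadj A0 \<noteq> 0" using A0
    by auto (metis cadj_cadj cadj_props(1))
  have sl2: "slices (cadj ` V) = cadj ` V2"
    using slices_eq[OF cadj_subspace[OF s2] cadj_subspace[OF s1] cA0] cV by simp
  have eq: "cadj ` V = V \<longleftrightarrow> V1 = cadj ` V2"
  proof
    assume "cadj ` V = V"
    then show "V1 = cadj ` V2" using sl1 sl2 by simp
  next
    assume h: "V1 = cadj ` V2"
    then have "cadj ` V1 = V2" by (simp add: image_image)
    then show "cadj ` V = V" using cV V h by simp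
  qed
  show ?thesis using eq sq_sub[OF s1 s2 V] by blast
qed

end
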